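(* Let $0\le\alpha<2\pi$, $0\le\beta<\pi/2$, and let $\{a_k\}_{k\in\mathbb Z}$ be a sequence of complex numbers with $a_k=0$ for all $k\le0$, such that $\{a_k\}_{k\ge1}\in\mathrm{GM}$ and $a_k\in S_{\alpha,\beta}$ for all $k\ge1$. Then $\{a_k\}_{k\in\mathbb Z}\in\overline{\mathrm{GM}}$.
   Context: $S_{\alpha,\beta}=\{z\in\mathbb C: z=0\text{ or }|\arg z-\alpha|\le\beta\}$. A sequence $\{a_k\}_{k\ge1}$ belongs to $\mathrm{GM}$ if there exist $C>0$ and $\lambda>1$ such that for every $n\ge1$, $\sum_{k=n}^{2n}|a_k-a_{k+1}|\le\frac Cn\sum_{n/\lambda\le k\le\lambda n}|a_k|$. For a two-sided sequence $a$: $|\Delta a_k|=|a_k-a_{k+1}|$ for $k>0$, $|\Delta a_k|=|a_k-a_{k-1}|$ for $k<0$, $|\Delta a_0|=|a_0-a_1|+|a_0-a_{-1}|$; for $k\ge0$, $\widehat a_{2^k}=\sup_{2^k\le|m|<2^{k+1}}\frac1{|m|+1}|\sum_{j=0}^ma_j|$, where for $m<0$, $\sum_{j=0}^ma_j$ means $\sum_{j=m}^0a_j$; $[\cdot]$ is the floor function. The sequence $a$ belongs to $\overline{\mathrm{GM}}$ if there is $C'>0$ such that for every $n\ge0$, $\sum_{[2^{n-1}]\le|m|<2^n}|\Delta a_m|\le C'\sup_{k\in\mathbb N_0}\min(1,2^{k-n})\widehat a_{2^k}$. *)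

theory Defs
  imports "HOL-Analysis.Analysis"
begin

definition sector :: "real \<Rightarrow> real \<Rightarrow> complex set" where
  "sector \<alpha> \<beta> = {z. z = 0 \<or> (\<exists>\<theta>. z = of_real (cmod z) * cis \<theta> \<and> \<bar>\<theta> - \<alpha>\<bar> \<le> \<beta>)}"

text \<open>General monotone sequences a_1, a_2, ... (index 0 unused).\<close>
definition GM :: "(nat \<Rightarrow> complex) \<Rightarrow> bool" where
  "GM a \<longleftrightarrow> (\<exists>C>0. \<exists>L>1. \<forall>n\<ge>1.
     (\<Sum>k=n..2*n. cmod (a k - a (k+1)))
       \<le> C / real n * (\<Sum>k\<in>{k. k \<ge> 1 \<and> real n / L \<le> real k \<and> real k \<le> L * real n}. cmod (a k)))"

definition absDelta :: "(int \<Rightarrow> complex) \<Rightarrow> int \<Rightarrow> real" where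
  "absDelta a k =
     (if k > 0 then cmod (a k - a (k+1))
      else if k < 0 then cmod (a k - a (k-1))
      else cmod (a 0 - a 1) + cmod (a 0 - a (-1)))"

definition psum :: "(int \<Rightarrow> complex) \<Rightarrow> int \<Rightarrow> complex" where
  "psum a m = (if m \<ge> 0 then (\<Sum>j\<in>{0..m}. a j) else (\<Sum>j\<in>{m..0}. a j))"

definition ahat :: "(int \<Rightarrow> complex) \<Rightarrow> nat \<Rightarrow> real" where
  "ahat a k = Sup ((\<lambda>m. cmod (psum a m) / (real_of_int \<bar>m\<bar> + 1)) `
                   {m::int. 2^k \<le> \<bar>m\<bar> \<and> \<bar>m\<bar> < 2^(k+1)})"

definition GMbar :: "(int \<Rightarrow> complex) \<Rightarrow> bool" where
  "GMbar a \<longleftrightarrow> (\<exists>C'>0. \<forall>n::nat.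
     ereal (\<Sum>m\<in>{m::int. \<lfloor>(2::real) powr (real n - 1)\<rfloor> \<le> \<bar>m\<bar> \<and> \<bar>m\<bar> < 2^n}. absDelta a m)
       \<le> ereal C' * (SUP k::nat. ereal (min 1 ((2::real) powr (real k - real n)) * ahat a k)))"

end

theory Submission
  imports Defs
begin

lemma sector_ineq:
  assumes "z \<in> sector \<alpha> \<beta>" "0 \<le> \<beta>" "\<beta> < pi/2"
  shows "cmod z * cos \<beta> \<le> Re (z * cis (-\<alpha>))"
proof (cases "z = 0")
  case True thus ?thesis by simp
next
  case False
  then obtain \<theta> where th: "z = of_real (cmod z) * cis \<theta>" "\<bar>\<theta> - \<alpha>\<bar> \<le> \<beta>"
    using assms(1) unfolding sector_def by auto
  have "z * cis (-\<alpha>) = of_real (cmod z) * (cis \<theta> * cis (-\<alpha>))"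
    using th(1) by (metis mult.assoc)
  also have "\<dots> = of_real (cmod z) * cis (\<theta> - \<alpha>)" by (simp add: cis_mult)
  finally have e: "Re (z * cis (-\<alpha>)) = cmod z * cos (\<theta> - \<alpha>)" by simp
  have "cos \<beta> \<le> cos \<bar>\<theta> - \<alpha>\<bar>"
    by (rule cos_monotone_0_pi_le) (use th(2) assms(3) in auto)
  hence "cos \<beta> \<le> cos (\<theta> - \<alpha>)" by simp
  thus ?thesis unfolding e by (simp add: mult_left_mono)
qed

lemma psum_nat:
  assumes "a 0 = 0"
  shows "psum a (int B) = (\<Sum>k=1..B. a (int k))"
proof -
  have "psum a (int B) = (\<Sum>j\<in>{0..int B}. a j)" by (simp add: psum_def)
  also have "{0..int B} = int ` {0..B}" by (simp add: image_int_atLeastAtMost)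
  also have "(\<Sum>j\<in>int ` {0..B}. a j) = (\<Sum>k=0..B. a (int k))"
    by (simp add: sum.reindex)
  also have "\<dots> = (\<Sum>k=1..B. a (int k))" using assms
    by (simp add: sum.atLeast_Suc_atMost)
  finally show ?thesis .
qed

lemma sum_bound:
  assumes "a 0 = 0" "\<And>k. k \<ge> 1 \<Longrightarrow> a k \<in> sector \<alpha> \<beta>" "0 \<le> \<beta>" "\<beta> < pi/2"
  shows "(\<Sum>k=1..B. cmod (a (int k))) * cos \<beta> \<le> cmod (psum a (int B))"
proof -
  have "(\<Sum>k=1..B. cmod (a (int k))) * cos \<beta> = (\<Sum>k=1..B. cmod (a (int k)) * cos \<beta>)"
    by (simp add: sum_distrib_right)
  also have "\<dots> \<le> (\<Sum>k=1..B. Re (a (int k) * cis (-\<alpha>)))"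
    by (rule sum_mono, rule sector_ineq) (use assms in auto)
  also have "\<dots> = Re ((\<Sum>k=1..B. a (int k)) * cis (-\<alpha>))"
    by (simp add: sum_distrib_right)
  also have "\<dots> \<le> cmod ((\<Sum>k=1..B. a (int k)) * cis (-\<alpha>))" by (rule complex_Re_le_cmod)
  also have "\<dots> = cmod (psum a (int B))" using psum_nat[of a B, OF assms(1)] by (simp add: norm_mult)
  finally show ?thesis .
qed

lemma ahat_upper:
  assumes "2^k \<le> \<bar>m\<bar>" "\<bar>m\<bar> < 2^(k+1)"
  shows "cmod (psum a m) / (real_of_int \<bar>m\<bar> + 1) \<le> ahat a k"
proof -
  have "{m::int. 2^k \<le> \<bar>m\<bar> \<and> \<bar>m\<bar> < 2^(k+1)} \<subseteq> {-(2^(k+1))..2^(k+1)}" by auto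
  hence fin: "finite {m::int. 2^k \<le> \<bar>m\<bar> \<and> \<bar>m\<bar> < 2^(k+1)}" by (rule finite_subset) simp
  show ?thesis unfolding ahat_def
    by (rule cSup_upper) (use assms fin in auto)
qed

lemma ahat_nonneg: "0 \<le> ahat a k"
proof -
  have "(0::real) \<le> cmod (psum a (2^k)) / (real_of_int \<bar>2^k\<bar> + 1)" by simp
  also have "\<dots> \<le> ahat a k" by (rule ahat_upper) auto
  finally show ?thesis .
qed

lemma sup_step:
  fixes a :: "int \<Rightarrow> complex"
  assumes "X \<le> C' * ahat a k" "n \<le> k" "0 \<le> C'"
  shows "ereal X \<le> ereal C' * (SUP k::nat. ereal (min 1 ((2::real) powr (real k - real n)) * ahat a k))"
proof -
  have "(1::real) \<le> 2 powr (real k - real n)" using assms(2) by (intro ge_one_powr_ge_zero) auto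
  hence m: "min 1 ((2::real) powr (real k - real n)) = 1" by simp
  have "ereal X \<le> ereal C' * ereal (ahat a k)" using assms(1) by simp
  also have "\<dots> \<le> ereal C' * (SUP k::nat. ereal (min 1 ((2::real) powr (real k - real n)) * ahat a k))"
    by (rule ereal_mult_left_mono) (use m assms(3) in \<open>auto intro!: SUP_upper2[where i=k]\<close>)
  finally show ?thesis .
qed

theorem mainTheorem13:
  fixes a :: "int \<Rightarrow> complex" and \<alpha> \<beta> :: real
  assumes "0 \<le> \<alpha>" "\<alpha> < 2 * pi" "0 \<le> \<beta>" "\<beta> < pi / 2"
    and "\<And>k. k \<le> 0 \<Longrightarrow> a k = 0"
    and "GM (\<lambda>k::nat. a (int k))"
    and "\<And>k. k \<ge> 1 \<Longrightarrow> a k \<in> sector \<alpha> \<beta>"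
  shows "GMbar a"
proof -
  obtain C L where C: "C > 0" and L: "L > 1" and gm: "\<And>n. n \<ge> 1 \<Longrightarrow>
     (\<Sum>k=n..2*n. cmod (a (int k) - a (int (k+1))))
       \<le> C / real n * (\<Sum>k\<in>{k. k \<ge> 1 \<and> real n / L \<le> real k \<and> real k \<le> L * real n}. cmod (a (int k)))"
    using assms(6) unfolding GM_def by blast
  obtain p where p: "L < 2 ^ p" using real_arch_pow[of 2 L] by auto
  have cb: "cos \<beta> > 0" using assms(3,4) by (intro cos_gt_zero_pi) auto
  have a0: "a 0 = 0" using assms(5) by simp
  define C' where "C' = max 2 (C * 2^(p+2) / cos \<beta>)"
  have C'pos: "C' > 0" unfolding C'_def by simp
  show ?thesis unfolding GMbar_def
  proof (intro exI[of _ C'] conjI allI C'pos)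
    fix n :: nat
    show "ereal (\<Sum>m\<in>{m::int. \<lfloor>(2::real) powr (real n - 1)\<rfloor> \<le> \<bar>m\<bar> \<and> \<bar>m\<bar> < 2^n}. absDelta a m)
       \<le> ereal C' * (SUP k::nat. ereal (min 1 ((2::real) powr (real k - real n)) * ahat a k))"
    proof (cases "n = 0")
      case True
      have "(2::real) powr (real 0 - 1) = 1/2" by (simp add: powr_minus_divide)
      hence "{m::int. \<lfloor>(2::real) powr (real n - 1)\<rfloor> \<le> \<bar>m\<bar> \<and> \<bar>m\<bar> < 2^n} = {0}"
        using True by auto
      hence e: "(\<Sum>m\<in>{m::int. \<lfloor>(2::real) powr (real n - 1)\<rfloor> \<le> \<bar>m\<bar> \<and> \<bar>m\<bar> < 2^n}. absDelta a m)
         = cmod (a 1)" using a0 assms(5)[of "-1"] by (simp add: absDelta_def)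
      have "cmod (psum a (int 1)) / (real_of_int \<bar>int 1\<bar> + 1) \<le> ahat a 0"
        by (rule ahat_upper) auto
      hence "cmod (a 1) \<le> 2 * ahat a 0" using psum_nat[of a 1, OF a0] by simp
      also have "\<dots> \<le> C' * ahat a 0" unfolding C'_def
        by (rule mult_right_mono) (auto simp: ahat_nonneg)
      finally show ?thesis unfolding e by (rule sup_step) (use True C'pos in auto)
    next
      case False
      hence n1: "n \<ge> 1" by simp
      define N :: nat where "N = 2^(n-1)"
      have N1: "N \<ge> 1" unfolding N_def by simp
      have pw: "(2::int)^n = 2 * int N" unfolding N_def using n1
        by (metis Suc_diff_le diff_Suc_1 of_nat_numeral of_nat_power power_Suc)
      have "(2::real) powr (real n - 1) = 2 powr real (n-1)" using n1 by (simp add: of_nat_diff)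
      also have "\<dots> = real N" unfolding N_def by (simp add: powr_realpow)
      finally have fl: "\<lfloor>(2::real) powr (real n - 1)\<rfloor> = int N" by simp
      define S where "S = {m::int. int N \<le> \<bar>m\<bar> \<and> \<bar>m\<bar> < 2^n}"
      define f where "f m = (if m > 0 then cmod (a m - a (m+1)) else 0)" for m
      have finS: "finite S"
        by (rule finite_subset[of _ "{-(2^n)..2^n}"]) (auto simp: S_def)
      have "(\<Sum>m\<in>S. absDelta a m) = (\<Sum>m\<in>S. f m)"
      proof (rule sum.cong)
        fix m assume "m \<in> S"
        hence "m \<noteq> 0" using N1 unfolding S_def by auto
        thus "absDelta a m = f m" using assms(5)[of m] assms(5)[of "m-1"]
          by (auto simp: absDelta_def f_def)
      qed simp
      also have "\<dots> = (\<Sum>m\<in>S \<inter> {0<..}. f m)"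
        by (rule sum.mono_neutral_right) (use finS in \<open>auto simp: f_def\<close>)
      also have "\<dots> \<le> (\<Sum>m\<in>int ` {N..2*N}. f m)"
      proof (rule sum_mono2)
        show "S \<inter> {0<..} \<subseteq> int ` {N..2*N}"
        proof
          fix m assume m: "m \<in> S \<inter> {0<..}"
          hence "m = int (nat m)" "nat m \<in> {N..2*N}" using pw unfolding S_def by auto
          thus "m \<in> int ` {N..2*N}" by blast
        qed
      qed (auto simp: f_def)
      also have "\<dots> = (\<Sum>k=N..2*N. cmod (a (int k) - a (int (k+1))))"
        by (subst sum.reindex) (use N1 in \<open>auto simp: f_def add.commute intro!: sum.cong\<close>)
      also have "\<dots> \<le> C / real N * (\<Sum>k\<in>{k. k \<ge> 1 \<and> real N / L \<le> real k \<and> real k \<le> L * real N}. cmod (a (int k)))"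
        by (rule gm[OF N1])
      finally have s1: "(\<Sum>m\<in>S. absDelta a m) \<le> C / real N * (\<Sum>k\<in>{k. k \<ge> 1 \<and> real N / L \<le> real k \<and> real k \<le> L * real N}. cmod (a (int k)))" .
      define B :: nat where "B = 2^(n+p)"
      define h where "h = ahat a (n+p)"
      have RB: "{k. k \<ge> 1 \<and> real N / L \<le> real k \<and> real k \<le> L * real N} \<subseteq> {1..B}"
      proof
        fix k assume k: "k \<in> {k. k \<ge> 1 \<and> real N / L \<le> real k \<and> real k \<le> L * real N}"
        have "real k \<le> L * real N" using k by auto
        also have "\<dots> \<le> 2^p * real N" using p by (intro mult_right_mono) auto
        also have "\<dots> \<le> real B" unfolding B_def N_def
          by (simp add: power_add[symmetric])
        finally show "k \<in> {1..B}" using k by auto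
      qed
      have s2: "(\<Sum>k\<in>{k. k \<ge> 1 \<and> real N / L \<le> real k \<and> real k \<le> L * real N}. cmod (a (int k)))
          \<le> (\<Sum>k=1..B. cmod (a (int k)))"
        by (rule sum_mono2[OF _ RB]) auto
      have "(\<Sum>k=1..B. cmod (a (int k))) * cos \<beta> \<le> cmod (psum a (int B))"
        by (rule sum_bound[of a, OF a0 assms(7) assms(3,4)])
      hence s3: "(\<Sum>k=1..B. cmod (a (int k))) \<le> cmod (psum a (int B)) / cos \<beta>"
        using cb by (simp add: pos_le_divide_eq)
      have "cmod (psum a (int B)) / (real_of_int \<bar>int B\<bar> + 1) \<le> h"
        unfolding h_def by (rule ahat_upper) (auto simp: B_def)
      hence s4: "cmod (psum a (int B)) \<le> (real B + 1) * h" by (simp add: divide_le_eq mult.commute)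
      have hnn: "0 \<le> h" unfolding h_def by (rule ahat_nonneg)
      have sumR: "(\<Sum>k\<in>{k. k \<ge> 1 \<and> real N / L \<le> real k \<and> real k \<le> L * real N}. cmod (a (int k)))
          \<le> (real B + 1) * h / cos \<beta>"
        using s2 s3 s4 cb by (smt (verit) divide_right_mono)
      have BN: "real B + 1 \<le> 2^(p+2) * real N"
      proof -
        have "real B + 1 \<le> 2 * real B" unfolding B_def by simp
        also have "\<dots> = 2^(p+2) * real N" unfolding B_def N_def using n1
          by (simp add: power_add[symmetric] power_Suc[symmetric] del: power_Suc)
        finally show ?thesis .
      qed
      have "(\<Sum>m\<in>S. absDelta a m) \<le> C / real N * ((real B + 1) * h / cos \<beta>)"
        using s1 sumR C by (smt (verit) divide_nonneg_nonneg mult_left_mono of_nat_0_le_iff)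
      also have "\<dots> = (C * (real B + 1) / real N) * h / cos \<beta>" by simp
      also have "\<dots> \<le> (C * 2^(p+2)) * h / cos \<beta>"
      proof -
        have "C * (real B + 1) / real N \<le> C * 2^(p+2)"
          using BN C N1 by (simp add: divide_le_eq mult_left_mono mult.assoc)
        thus ?thesis using hnn cb by (intro divide_right_mono mult_right_mono) auto
      qed
      also have "\<dots> = (C * 2^(p+2) / cos \<beta>) * h" by simp
      also have "\<dots> \<le> C' * h" unfolding C'_def using hnn by (intro mult_right_mono) auto
      finally have fin: "(\<Sum>m\<in>S. absDelta a m) \<le> C' * ahat a (n+p)" unfolding h_def .
      have "{m::int. \<lfloor>(2::real) powr (real n - 1)\<rfloor> \<le> \<bar>m\<bar> \<and> \<bar>m\<bar> < 2^n} = S"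
        unfolding S_def fl ..
      thus ?thesis using sup_step[OF fin _ less_imp_le[OF C'pos]] by simp
    qed
  qed
qed

end
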